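(* There exists a universal constant $C<\infty$ such that the following holds. Let $G=(V,E)$ be an infinite, connected, locally finite graph (multiple edges allowed, no self-loops), let $v\in V$ have degree $d_v$, and let $(X_t)$ be simple random walk on $G$ with $X_0=v$. Then for every integer $t\geq 1$, $$\mathbb{P}_v(\tau_v = t \mid \tau_v\geq t) \leq \frac{C\log(d_v t)}{t}.$$
   Context: For a vertex $u$, $\tau_u=\min\{t\geq 1: X_t=u\}$; when $X_0=v$, $\tau_v$ is the return time to $v$. $\mathbb{P}_v$ denotes the law of simple random walk started at $v$. *)

theory Defs
  imports Complex_Main
begin

text \<open>A multigraph on vertex set nat is given by an edge-multiplicity function
  m u w = number of edges between u and w.\<close>

definition multigraph_ok :: "(nat \<Rightarrow> nat \<Rightarrow> nat) \<Rightarrow> bool" where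
  "multigraph_ok m \<longleftrightarrow>
     (\<forall>u w. m u w = m w u) \<and>
     (\<forall>u. m u u = 0) \<and>
     (\<forall>u. finite {w. 0 < m u w}) \<and>
     (\<forall>u w. (u, w) \<in> {(a, b). 0 < m a b}\<^sup>*)"

definition deg :: "(nat \<Rightarrow> nat \<Rightarrow> nat) \<Rightarrow> nat \<Rightarrow> nat" where
  "deg m u = (\<Sum>w\<in>{w. 0 < m u w}. m u w)"

definition walk_prob :: "(nat \<Rightarrow> nat \<Rightarrow> nat) \<Rightarrow> nat list \<Rightarrow> real" where
  "walk_prob m xs = (\<Prod>i<length xs - 1. real (m (xs!i) (xs!Suc i)) / real (deg m (xs!i)))"

definition is_walk :: "(nat \<Rightarrow> nat \<Rightarrow> nat) \<Rightarrow> nat list \<Rightarrow> bool" where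
  "is_walk m xs \<longleftrightarrow> (\<forall>i. Suc i < length xs \<longrightarrow> 0 < m (xs!i) (xs!Suc i))"

text \<open>P_v(tau_v >= t): paths X_0 = v, X_1, ..., X_(t-1) with X_i \<noteq> v for 1 \<le> i \<le> t-1.\<close>
definition prob_ret_ge :: "(nat \<Rightarrow> nat \<Rightarrow> nat) \<Rightarrow> nat \<Rightarrow> nat \<Rightarrow> real" where
  "prob_ret_ge m v t = (\<Sum>xs\<in>{xs. length xs = t \<and> xs!0 = v \<and> is_walk m xs \<and>
       (\<forall>i. 1 \<le> i \<and> i < t \<longrightarrow> xs!i \<noteq> v)}. walk_prob m xs)"

text \<open>P_v(tau_v = t): paths X_0 = v, ..., X_t with X_i \<noteq> v for 1 \<le> i < t and X_t = v.\<close>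
definition prob_ret_eq :: "(nat \<Rightarrow> nat \<Rightarrow> nat) \<Rightarrow> nat \<Rightarrow> nat \<Rightarrow> real" where
  "prob_ret_eq m v t = (\<Sum>xs\<in>{xs. length xs = Suc t \<and> xs!0 = v \<and> is_walk m xs \<and>
       (\<forall>i. 1 \<le> i \<and> i < t \<longrightarrow> xs!i \<noteq> v) \<and> xs!t = v}. walk_prob m xs)"

end

theory Submission
  imports Defs
begin


lemma ln2_ge_half: "1/2 \<le> ln (2::real)"
proof -
  have "exp (1/2::real) * exp (1/2) = exp 1" by (simp flip: exp_add)
  also have "\<dots> \<le> 3" by (rule exp_le)
  finally have "exp (1/2::real) ^ 2 \<le> 2 ^ 2" by (simp add: power2_eq_square)
  then have "exp (1/2::real) \<le> 2" by (rule power2_le_imp_le) simp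
  then show ?thesis by (metis exp_gt_zero ln_exp ln_le_cancel_iff zero_less_numeral)
qed

lemma logconv:
  fixes e :: "nat \<Rightarrow> real"
  assumes nn: "\<And>j. 0 \<le> e j" and mono: "\<And>j. e (Suc j) \<le> e j"
    and lc: "\<And>j. (e (Suc j))\<^sup>2 \<le> e j * e (Suc (Suc j))"
  shows "e (Suc a) * e (a + k) \<le> e a * e (Suc (a + k))"
proof (induction k)
  case 0 show ?case by (simp add: mult.commute)
next
  case (Suc k)
  show ?case
  proof (cases "e (a + k) = 0")
    case True
    then have "e (Suc (a + k)) = 0" using mono[of "a+k"] nn[of "Suc (a+k)"] by simp
    then show ?thesis using nn by (simp add: mult_nonneg_nonneg)
  next
    case False
    then have pos: "0 < e (a + k)" using nn[of "a+k"] by simp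
    have "e (Suc a) * e (a + k) * e (Suc (a + k)) \<le> e a * e (Suc (a + k)) * e (Suc (a + k))"
      by (rule mult_right_mono[OF Suc.IH nn])
    also have "\<dots> = e a * (e (Suc (a + k)))\<^sup>2" by (simp add: power2_eq_square)
    also have "\<dots> \<le> e a * (e (a + k) * e (Suc (Suc (a + k))))"
      by (rule mult_left_mono[OF lc nn])
    finally have "e (a + k) * (e (Suc a) * e (Suc (a + k))) \<le> e (a + k) * (e a * e (Suc (Suc (a + k))))"
      by (simp add: mult_ac)
    then show ?thesis using pos by simp
  qed
qed

lemma abstract:
  fixes c Z :: "nat \<Rightarrow> real" and d :: real and n :: nat
  assumes c_nn: "\<And>j. 0 \<le> c j"
    and E1: "\<And>j. c (2*j+2) \<le> c (2*j)"
    and E2: "\<And>j. (c (2*j+2))\<^sup>2 \<le> c (2*j) * c (2*j+4)"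
    and E3: "\<And>j. c (2*j+1) \<le> c (2*j)"
    and E4: "c 0 \<le> d" and d1: "1 \<le> d"
    and Zs: "\<And>j. Z j = Z (Suc j) + c j"
    and Znn: "\<And>j. 0 \<le> Z j"
    and Zlow: "1 / (2 * real (Suc n)) \<le> Z n"
  shows "c n / Z n \<le> 100 * ln (d * real (n+2)) / real (n+2)"
proof -
  define e where "e j = c (2*j)" for j
  define T where "T = real (n+2)"
  define L where "L = ln (d * T)"
  have T2: "2 \<le> T" unfolding T_def by simp
  have dT: "2 \<le> d * T" using d1 T2 by (metis mult_mono' mult_1 one_le_numeral order_trans zero_le_one)
  have L2: "ln 2 \<le> L" unfolding L_def using dT by simp
  have Lh: "1/2 \<le> L" using L2 ln2_ge_half by simp
  have "0 < 1 / (2 * real (Suc n))" by simp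
  then have Zpos: "0 < Z n" using Zlow by linarith
  have Zc: "c n \<le> Z n" using Zs[of n] Znn[of "Suc n"] by simp
  have RHS_nn: "0 \<le> 100 * L / T" using Lh T2 by simp
  define k where "k = n div 2"
  have cn: "c n \<le> e k"
  proof (cases "even n")
    case True then have "n = 2*k" unfolding k_def by simp
    then show ?thesis unfolding e_def by simp
  next
    case False then have "n = 2*k+1" unfolding k_def by simp
    then show ?thesis unfolding e_def using E3 by simp
  qed
  have e_nn: "\<And>j. 0 \<le> e j" unfolding e_def using c_nn by simp
  have e_mono: "\<And>j. e (Suc j) \<le> e j" unfolding e_def using E1 by (simp add: mult_2_right add_ac)
  have e_lc: "(e (Suc j))\<^sup>2 \<le> e j * e (Suc (Suc j))" for j
  proof -
    have h: "2 * Suc (Suc j) = 2*j+4" "2 * Suc j = 2*j+2" by simp_all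
    show ?thesis unfolding e_def h by (rule E2)
  qed
  note lcv = logconv[of e, OF e_nn e_mono e_lc]
  show ?thesis
  proof (cases "e k = 0")
    case True
    then have "c n = 0" using cn c_nn[of n] by simp
    then show ?thesis using RHS_nn unfolding T_def L_def by simp
  next
    case False
    then have ek: "0 < e k" using e_nn[of k] by simp
    define \<rho> where "\<rho> = e (Suc k) / e k"
    have r0: "0 \<le> \<rho>" unfolding \<rho>_def using e_nn ek by simp
    have r1: "\<rho> \<le> 1" unfolding \<rho>_def using e_mono[of k] ek by simp
    have low: "e k * \<rho> ^ i \<le> e (k + i)" for i
    proof (induction i)
      case 0 show ?case by simp
    next
      case (Suc i)
      have "e (Suc k) * e (k + i) \<le> e k * e (Suc (k + i))" by (rule lcv)
      then have "\<rho> * e (k + i) \<le> e (Suc (k + i))" unfolding \<rho>_def using ek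
        by (simp add: field_simps)
      moreover have "\<rho> * (e k * \<rho> ^ i) \<le> \<rho> * e (k + i)" by (rule mult_left_mono[OF Suc.IH r0])
      ultimately show ?case by (simp add: mult_ac)
    qed
    have up: "j \<le> k \<Longrightarrow> e j \<le> e 0 * \<rho> ^ j" for j
    proof (induction j)
      case 0 show ?case by simp
    next
      case (Suc j)
      have "e (Suc j) * e (j + (k - j)) \<le> e j * e (Suc (j + (k - j)))" by (rule lcv)
      then have "e (Suc j) * e k \<le> e j * e (Suc k)" using Suc.prems by simp
      then have "e (Suc j) \<le> e j * \<rho>" unfolding \<rho>_def using ek by (simp add: field_simps)
      also have "\<dots> \<le> e 0 * \<rho> ^ j * \<rho>" by (rule mult_right_mono[OF Suc.IH r0]) (use Suc.prems in simp)
      finally show ?case by (simp add: mult_ac)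
    qed
    have ek_up: "e k \<le> d * \<rho> ^ k"
    proof -
      have "e k \<le> e 0 * \<rho> ^ k" using up[of k] by simp
      also have "\<dots> \<le> d * \<rho> ^ k" using mult_right_mono[OF E4 zero_le_power[OF r0, of k]] unfolding e_def by simp
      finally show ?thesis .
    qed
    have Zmono: "Z j \<le> Z i" if "i \<le> j" for i j
      using that
    proof (induction j)
      case 0 then show ?case by simp
    next
      case (Suc j)
      then show ?case
      proof (cases "i = Suc j")
        case False
        then have "Z j \<le> Z i" using Suc by simp
        then show ?thesis using Zs[of j] c_nn[of j] by simp
      qed simp
    qed
    have Zsum: "(\<Sum>i<M. e (j + i)) \<le> Z (2*j)" for M j
    proof (induction M arbitrary: j)
      case 0 then show ?case using Znn by simp
    next
      case (Suc M)
      have "(\<Sum>i<Suc M. e (j + i)) = e j + (\<Sum>i<M. e (Suc j + i))"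
        by (simp add: sum.lessThan_Suc_shift del: sum.lessThan_Suc)
      also have "\<dots> \<le> e j + Z (2 * Suc j)" using Suc.IH[of "Suc j"] by simp
      also have "\<dots> \<le> Z (2*j)"
        using Zs[of "2*j"] Zs[of "Suc (2*j)"] c_nn[of "Suc (2*j)"] unfolding e_def by simp
      finally show ?case .
    qed
    have ZM: "real M * e k * \<rho> ^ M \<le> Z n" for M
    proof -
      have "real M * (e k * \<rho> ^ M) = (\<Sum>i<M. e k * \<rho> ^ M)" by simp
      also have "\<dots> \<le> (\<Sum>i<M. e k * \<rho> ^ Suc i)"
      proof (rule sum_mono)
        fix i assume "i \<in> {..<M}"
        then have "Suc i \<le> M" by simp
        then have "\<rho> ^ M \<le> \<rho> ^ Suc i" by (rule power_decreasing[OF _ r0 r1])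
        then show "e k * \<rho> ^ M \<le> e k * \<rho> ^ Suc i" using ek by simp
      qed
      also have "\<dots> \<le> (\<Sum>i<M. e (Suc k + i))"
      proof (rule sum_mono)
        fix i show "e k * \<rho> ^ Suc i \<le> e (Suc k + i)" using low[of "Suc i"] by (simp del: power_Suc)
      qed
      also have "\<dots> \<le> Z (2 * Suc k)" by (rule Zsum)
      also have "\<dots> \<le> Z n" by (rule Zmono) (simp add: k_def)
      finally show ?thesis by (simp add: mult_ac)
    qed
    have ratio1: "c n / Z n \<le> 1" using Zc Zpos by simp
    have Tpos: "0 < T" using T2 by simp
    have ln2pos: "0 < ln (2::real)" by simp
    have Lpos: "0 < L" using Lh by simp
    have goal_form: "c n \<le> 100 * L / T * Z n \<Longrightarrow> ?thesis"
      using Zpos unfolding T_def L_def by (simp add: divide_le_eq mult.commute)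
    show ?thesis
    proof (cases "T < 64 * L")
      case True
      have "c n \<le> Z n" by (rule Zc)
      also have "\<dots> \<le> 100 * L / T * Z n"
      proof -
        have "1 \<le> 100 * L / T" using True Tpos Lpos by (simp add: field_simps)
        then have "1 * Z n \<le> 100 * L / T * Z n" by (rule mult_right_mono) (use Zpos in simp)
        then show ?thesis by simp
      qed
      finally show ?thesis by (rule goal_form)
    next
      case False
      then have TL: "64 * L \<le> T" by simp
      define x where "x = 3 * L / ln 2"
      define q where "q = nat \<lceil>x\<rceil>"
      have x_pos: "0 < x" unfolding x_def using Lpos ln2pos by simp
      have q_eq: "real q = of_int \<lceil>x\<rceil>" unfolding q_def using x_pos by simp
      have q_lo: "x \<le> real q" unfolding q_eq by (rule le_of_int_ceiling)
      have q_hi0: "real q \<le> x + 1" unfolding q_eq by (rule of_int_ceiling_le_add_one)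
      have "x \<le> 6 * L"
      proof -
        have "3 * L \<le> 6 * L * ln 2" using ln2_ge_half Lpos by (simp add: mult_left_mono[of "1/2" "ln 2" "6*L", simplified])
        then show ?thesis unfolding x_def using ln2pos by (simp add: divide_le_eq)
      qed
      then have q_hi: "real q \<le> 8 * L" using q_hi0 Lh by simp
      have q_pos: "0 < q" using q_lo x_pos by simp
      have pow_q: "(d * T) ^ 3 \<le> 2 ^ q"
      proof -
        have "ln ((d * T) ^ 3) = 3 * L" unfolding L_def by (simp add: ln_realpow)
        also have "\<dots> \<le> real q * ln 2" using q_lo ln2pos unfolding x_def by (simp add: divide_le_eq)
        also have "\<dots> = ln (2 ^ q)" by (simp add: ln_realpow)
        finally show ?thesis using dT by simp
      qed
      define M where "M = k div q"
      have kq_nat: "k < (M + 1) * q" unfolding M_def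
        using q_pos by (metis add.commute div_mult_mod_eq mod_less_divisor mult_Suc nat_add_left_cancel_less plus_1_eq_Suc)
      then have kq: "real k < (real M + 1) * real q" by (metis of_nat_1 of_nat_add of_nat_less_iff of_nat_mult)
      have kT: "T \<le> 2 * real k + 3" unfolding T_def k_def by linarith
      have "(real M + 1) * real q \<le> (real M + 1) * (8 * L)" by (rule mult_left_mono[OF q_hi]) simp
      then have "T - 3 < 16 * L * (real M + 1)" using kq kT by (simp add: algebra_simps)
      then have M_big: "T \<le> 32 * L * real M" using TL Lh by (simp add: algebra_simps)
      show ?thesis
      proof (cases "1/2 \<le> \<rho> ^ M")
        case True
        have "e k \<le> 100 * L / T * (real M * e k * (1/2))"
        proof -
          have "1 \<le> 100 * L / T * (real M * (1/2))" using M_big Tpos Lpos by (simp add: field_simps)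
          then have "e k * 1 \<le> e k * (100 * L / T * (real M * (1/2)))" by (rule mult_left_mono) (use ek in simp)
          then show ?thesis by (simp add: mult_ac)
        qed
        also have "\<dots> \<le> 100 * L / T * (real M * e k * \<rho> ^ M)"
        proof (rule mult_left_mono)
          show "real M * e k * (1/2) \<le> real M * e k * \<rho> ^ M" by (rule mult_left_mono[OF True]) (use ek in simp)
        qed (use Lpos Tpos in simp)
        also have "\<dots> \<le> 100 * L / T * Z n" by (rule mult_left_mono[OF ZM]) (use Lpos Tpos in simp)
        finally show ?thesis using cn by (intro goal_form) simp
      next
        case False
        have "\<rho> ^ k \<le> \<rho> ^ (M * q)"
          by (rule power_decreasing[OF _ r0 r1]) (simp add: M_def)
        also have "\<dots> = (\<rho> ^ M) ^ q" by (simp add: power_mult)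
        also have "\<dots> \<le> (1/2) ^ q" by (rule power_mono) (use False r0 in auto)
        finally have "\<rho> ^ k \<le> 1 / 2 ^ q" by (simp add: power_divide)
        then have "d * \<rho> ^ k \<le> d * (1 / 2 ^ q)" by (rule mult_left_mono) (use d1 in simp)
        then have "e k \<le> d / 2 ^ q" using ek_up by simp
        also have "\<dots> \<le> d / (d * T) ^ 3" by (rule divide_left_mono[OF pow_q]) (use d1 Tpos in auto)
        also have "\<dots> = 1 / (d^2 * T^3)" using d1 by (simp add: power3_eq_cube power2_eq_square field_simps)
        also have "\<dots> \<le> 1 / T^3" using d1 Tpos by (simp add: frac_le one_le_power)
        also have "\<dots> \<le> 1 / T^2"
          by (rule divide_left_mono) (use T2 in \<open>auto simp: power3_eq_cube power2_eq_square\<close>)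
        also have "\<dots> \<le> 50 * L / T^2"
          by (rule divide_right_mono) (use Lh in simp_all)
        also have "\<dots> = 100 * L / T * (1 / (2 * T))"
          using Tpos by (simp add: field_simps power2_eq_square)
        also have "\<dots> \<le> 100 * L / T * Z n"
        proof (rule mult_left_mono)
          have "1 / (2 * T) \<le> 1 / (2 * real (Suc n))"
            by (rule divide_left_mono) (simp_all add: T_def)
          then show "1 / (2 * T) \<le> Z n" using Zlow by linarith
        qed (use Lpos Tpos in simp)
        finally show ?thesis using cn by (intro goal_form) simp
      qed
    qed
  qed
qed




definition nb :: "(nat \<Rightarrow> nat \<Rightarrow> nat) \<Rightarrow> nat \<Rightarrow> nat set" where
  "nb m x = {w. 0 < m x w}"

definition Pr :: "(nat \<Rightarrow> nat \<Rightarrow> nat) \<Rightarrow> nat \<Rightarrow> nat \<Rightarrow> real" where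
  "Pr m x y = real (m x y) / real (deg m x)"

fun ball :: "(nat \<Rightarrow> nat \<Rightarrow> nat) \<Rightarrow> nat \<Rightarrow> nat \<Rightarrow> nat set" where
  "ball m v 0 = {v}"
| "ball m v (Suc n) = ball m v n \<union> (\<Union>x\<in>ball m v n. nb m x)"

locale G =
  fixes m :: "nat \<Rightarrow> nat \<Rightarrow> nat" and v :: nat
  assumes ok: "multigraph_ok m"
begin

lemma sym: "m x y = m y x" using ok unfolding multigraph_ok_def by blast
lemma noloop: "m x x = 0" using ok unfolding multigraph_ok_def by blast
lemma fin_nb: "finite (nb m x)" using ok unfolding multigraph_ok_def nb_def by blast
lemma conn: "(x, y) \<in> {(a, b). 0 < m a b}\<^sup>*" using ok unfolding multigraph_ok_def by blast

lemma deg_nb: "deg m x = (\<Sum>w\<in>nb m x. m x w)" unfolding deg_def nb_def by simp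

lemma has_nb: "\<exists>y. 0 < m x y"
proof -
  have "(x, Suc x) \<in> {(a, b). 0 < m a b}\<^sup>*" by (rule conn)
  then show ?thesis
    by (cases rule: converse_rtranclE) auto
qed

lemma deg_pos: "0 < deg m x"
proof -
  obtain y where y: "0 < m x y" using has_nb by blast
  have "m x y \<le> deg m x" unfolding deg_nb
    by (rule member_le_sum) (use y fin_nb nb_def in auto)
  with y show ?thesis by simp
qed

lemma m_le_deg: "m x y \<le> deg m x"
proof (cases "0 < m x y")
  case True
  show ?thesis unfolding deg_nb
    by (rule member_le_sum) (use True fin_nb nb_def in auto)
qed simp

lemma sum_Pr: "(\<Sum>y\<in>nb m x. Pr m x y) = 1"
proof -
  have "(\<Sum>y\<in>nb m x. Pr m x y) = (\<Sum>y\<in>nb m x. real (m x y)) / real (deg m x)"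
    unfolding Pr_def by (simp add: sum_divide_distrib)
  moreover have "real (deg m x) = (\<Sum>y\<in>nb m x. real (m x y))" by (simp add: deg_nb)
  ultimately show ?thesis using deg_pos[of x] by simp
qed

lemma Pr_nonneg: "0 \<le> Pr m x y" unfolding Pr_def by simp

lemma fin_ball: "finite (ball m v n)"
  by (induction n) (auto simp: fin_nb)

lemma ball_mono: "i \<le> j \<Longrightarrow> ball m v i \<subseteq> ball m v j"
  by (induction j) (auto simp: le_Suc_eq)

lemma v_ball: "v \<in> ball m v n"
  by (induction n) auto

lemma nb_ball: "x \<in> ball m v n \<Longrightarrow> nb m x \<subseteq> ball m v (Suc n)"
  by auto

lemma nb_out: "x \<notin> ball m v (Suc n) \<Longrightarrow> 0 < m x y \<Longrightarrow> y \<notin> ball m v n"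
  using sym by (auto simp: nb_def)

lemma layer_exists: "\<exists>y. y \<notin> ball m v n \<and> y \<in> ball m v (Suc n)"
proof -
  obtain z where z: "z \<notin> ball m v n"
    using fin_ball[of n] by (metis ex_new_if_finite infinite_UNIV_nat)
  have "(v, z) \<in> {(a, b). 0 < m a b}\<^sup>*" by (rule conn)
  then have "z \<in> ball m v n \<or> (\<exists>y. y \<notin> ball m v n \<and> y \<in> ball m v (Suc n))"
  proof (induction rule: rtrancl_induct)
    case base then show ?case using v_ball by blast
  next
    case (step a b)
    then show ?case by (auto simp: nb_def)
  qed
  with z show ?thesis by blast
qed

lemma layered_path:
  "y \<notin> ball m v L \<Longrightarrow> y \<in> ball m v (Suc L) \<Longrightarrow>
   \<exists>p. p 0 = v \<and> p (Suc L) = y \<and> (\<forall>j<Suc L. 0 < m (p j) (p (Suc j))) \<and> (\<forall>j\<le>Suc L. p j \<in> ball m v j)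
      \<and> (\<forall>j<Suc L. p (Suc j) \<notin> ball m v j)"
proof (induction L arbitrary: y)
  case 0
  then have "0 < m v y" by (auto simp: nb_def)
  then show ?case using 0 by (intro exI[of _ "\<lambda>j. if j = 0 then v else y"]) (auto simp: le_Suc_eq)
next
  case (Suc L)
  then obtain x where x: "x \<in> ball m v (Suc L)" "0 < m x y" by (auto simp: nb_def)
  have xn: "x \<notin> ball m v L" using x Suc.prems(1) by (auto simp: nb_def)
  from Suc.IH[OF xn x(1)] obtain p where p: "p 0 = v" "p (Suc L) = x"
    "\<forall>j<Suc L. 0 < m (p j) (p (Suc j))" "\<forall>j\<le>Suc L. p j \<in> ball m v j"
    "\<forall>j<Suc L. p (Suc j) \<notin> ball m v j" by blast
  let ?q = "p(Suc (Suc L) := y)"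
  show ?case
    apply (rule exI[of _ ?q])
    using p x Suc.prems by (auto simp: less_Suc_eq le_Suc_eq)
qed

lemma path_exists:
  "\<exists>p. p 0 = v \<and> (\<forall>j<Suc L. 0 < m (p j) (p (Suc j))) \<and> (\<forall>j\<le>Suc L. p j \<in> ball m v j)
      \<and> (\<forall>j<Suc L. p (Suc j) \<notin> ball m v j)"
  using layer_exists[of L] layered_path by blast

lemma path_inj:
  assumes "\<forall>j\<le>Suc L. p j \<in> ball m v j" "\<forall>j<Suc L. p (Suc j) \<notin> ball m v j"
  shows "inj_on p {..Suc L}"
proof (rule inj_onI)
  fix i j assume ij: "i \<in> {..Suc L}" "j \<in> {..Suc L}" "p i = p j"
  show "i = j"
  proof (rule ccontr)
    assume "i \<noteq> j"
    then consider "i < j" | "j < i" by linarith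
    then show False
    proof cases
      case 1
      then obtain j' where j': "j = Suc j'" "i \<le> j'" by (cases j) auto
      have "p i \<in> ball m v j'" using assms(1) ij ball_mono[OF j'(2)] by auto
      moreover have "j' < Suc L" using ij(2) j'(1) by simp
      then have "p (Suc j') \<notin> ball m v j'" using assms(2) by blast
      then have "p j \<notin> ball m v j'" using j'(1) by simp
      ultimately show False using ij(3) by simp
    next
      case 2
      then obtain i' where i': "i = Suc i'" "j \<le> i'" by (cases i) auto
      have "p j \<in> ball m v i'" using assms(1) ij ball_mono[OF i'(2)] by auto
      moreover have "i' < Suc L" using ij(1) i'(1) by simp
      then have "p (Suc i') \<notin> ball m v i'" using assms(2) by blast
      then have "p i \<notin> ball m v i'" using i'(1) by simp
      ultimately show False using ij(3) by simp
    qed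
  qed
qed

end

lemma L1: "(\<forall>i. 1 \<le> i \<and> i < Suc (Suc n) \<longrightarrow> P i) = (\<forall>i\<le>Suc n. i \<noteq> 0 \<longrightarrow> P i)"
proof (intro iffI allI impI)
  fix i assume H: "\<forall>i. 1 \<le> i \<and> i < Suc (Suc n) \<longrightarrow> P i" "i \<le> Suc n" "i \<noteq> 0"
  then show "P i" by simp
next
  fix i assume H: "\<forall>i\<le>Suc n. i \<noteq> 0 \<longrightarrow> P i" "1 \<le> i \<and> i < Suc (Suc n)"
  then show "P i" by simp
qed
lemma L2: "((\<forall>i. 1 \<le> i \<and> i < Suc n \<longrightarrow> P i) \<and> Q (Suc n)) \<longleftrightarrow> (\<forall>i\<le>Suc n. i \<noteq> 0 \<longrightarrow> (if i < Suc n then P i else Q i))"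
proof (intro iffI allI impI conjI)
  fix i assume H: "(\<forall>i. 1 \<le> i \<and> i < Suc n \<longrightarrow> P i) \<and> Q (Suc n)" "i \<le> Suc n" "i \<noteq> 0"
  then show "if i < Suc n then P i else Q i" by (cases "i < Suc n") auto
next
  fix i assume H: "\<forall>i\<le>Suc n. i \<noteq> 0 \<longrightarrow> (if i < Suc n then P i else Q i)" "1 \<le> i \<and> i < Suc n"
  then show "P i" by simp
next
  assume H: "\<forall>i\<le>Suc n. i \<noteq> 0 \<longrightarrow> (if i < Suc n then P i else Q i)"
  then show "Q (Suc n)" by (metis Suc_neq_Zero le_refl less_irrefl)
qed

definition WS :: "(nat \<Rightarrow> nat \<Rightarrow> nat) \<Rightarrow> nat \<Rightarrow> nat \<Rightarrow> (nat \<Rightarrow> nat \<Rightarrow> bool) \<Rightarrow> nat list set" where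
  "WS m n x g = {xs. length xs = Suc n \<and> xs!0 = x \<and> is_walk m xs \<and> (\<forall>i\<le>n. g i (xs!i))}"

definition W :: "(nat \<Rightarrow> nat \<Rightarrow> nat) \<Rightarrow> nat \<Rightarrow> nat \<Rightarrow> (nat \<Rightarrow> nat \<Rightarrow> bool) \<Rightarrow> real" where
  "W m n x g = (\<Sum>xs\<in>WS m n x g. walk_prob m xs)"

lemma WS_0: "WS m 0 x g = (if g 0 x then {[x]} else {})"
  unfolding WS_def is_walk_def
  by (auto simp: length_Suc_conv)

lemma is_walk_Cons: "ys \<noteq> [] \<Longrightarrow> is_walk m (x # ys) \<longleftrightarrow> 0 < m x (ys!0) \<and> is_walk m ys"
  unfolding is_walk_def
  apply (auto simp: nth_Cons split: nat.splits)
  done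

lemma walk_prob_Cons: "ys \<noteq> [] \<Longrightarrow> walk_prob m (x # ys) = Pr m x (ys!0) * walk_prob m ys"
  unfolding walk_prob_def Pr_def
proof -
  assume "ys \<noteq> []"
  then obtain k where k: "length ys = Suc k" by (cases ys) auto
  show "(\<Prod>i<length (x # ys) - 1. real (m ((x # ys) ! i) ((x # ys) ! Suc i)) / real (deg m ((x # ys) ! i))) =
    real (m x (ys ! 0)) / real (deg m x) * (\<Prod>i<length ys - 1. real (m (ys ! i) (ys ! Suc i)) / real (deg m (ys ! i)))"
    using k by (simp add: prod.lessThan_Suc_shift del: prod.lessThan_Suc)
qed

lemma WS_Suc: "WS m (Suc n) x g = (if g 0 x then (\<lambda>(y,ys). x # ys) ` (SIGMA y:nb m x. WS m n y (\<lambda>i. g (Suc i))) else {})"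
proof (cases "g 0 x")
  case True
  have "WS m (Suc n) x g \<subseteq> (\<lambda>(y,ys). x # ys) ` (SIGMA y:nb m x. WS m n y (\<lambda>i. g (Suc i)))"
  proof
    fix xs assume xs: "xs \<in> WS m (Suc n) x g"
    then obtain a ys where xs': "xs = a # ys" "length ys = Suc n" unfolding WS_def by (auto simp: length_Suc_conv)
    have "ys \<noteq> []" using xs' by auto
    then have "a = x" "0 < m x (ys!0)" "is_walk m ys" "\<forall>i\<le>n. g (Suc i) (ys!i)"
      using xs xs' unfolding WS_def by (auto simp: is_walk_Cons)
    then show "xs \<in> (\<lambda>(y,ys). x # ys) ` (SIGMA y:nb m x. WS m n y (\<lambda>i. g (Suc i)))"
      using xs' by (intro image_eqI[of _ _ "(ys!0, ys)"]) (auto simp: WS_def nb_def)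
  qed
  moreover have "(\<lambda>(y,ys). x # ys) ` (SIGMA y:nb m x. WS m n y (\<lambda>i. g (Suc i))) \<subseteq> WS m (Suc n) x g"
  proof clarify
    fix y ys assume a: "y \<in> nb m x" "ys \<in> WS m n y (\<lambda>i. g (Suc i))"
    then have "ys \<noteq> []" unfolding WS_def by auto
    then show "x # ys \<in> WS m (Suc n) x g"
      using a True unfolding WS_def nb_def
      by (auto simp: is_walk_Cons nth_Cons split: nat.splits)
  qed
  ultimately show ?thesis using True by auto
qed (auto simp: WS_def)

context G begin

lemma fin_WS: "finite (WS m n x g)"
proof (induction n arbitrary: x g)
  case 0 then show ?case by (simp add: WS_0)
next
  case (Suc n) then show ?case by (simp add: WS_Suc fin_nb)
qed

lemma W_0: "W m 0 x g = (if g 0 x then 1 else 0)"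
  unfolding W_def WS_0 by (simp add: walk_prob_def)

lemma W_Suc: "W m (Suc n) x g = (if g 0 x then (\<Sum>y\<in>nb m x. Pr m x y * W m n y (\<lambda>i. g (Suc i))) else 0)"
proof (cases "g 0 x")
  case True
  have inj: "inj_on (\<lambda>(y,ys). x # ys) (SIGMA y:nb m x. WS m n y (\<lambda>i. g (Suc i)))"
    by (rule inj_onI) (auto simp: WS_def)
  have "W m (Suc n) x g = (\<Sum>(y,ys)\<in>(SIGMA y:nb m x. WS m n y (\<lambda>i. g (Suc i))). walk_prob m (x # ys))"
    unfolding W_def WS_Suc using True sum.reindex[OF inj, of "walk_prob m"] by (simp add: case_prod_unfold)
  also have "\<dots> = (\<Sum>y\<in>nb m x. \<Sum>ys\<in>WS m n y (\<lambda>i. g (Suc i)). walk_prob m (x # ys))"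
    by (rule sum.Sigma[symmetric]) (auto simp: fin_nb fin_WS)
  also have "\<dots> = (\<Sum>y\<in>nb m x. \<Sum>ys\<in>WS m n y (\<lambda>i. g (Suc i)). Pr m x y * walk_prob m ys)"
    apply (rule sum.cong, simp, rule sum.cong, simp)
    by (subst walk_prob_Cons) (auto simp: WS_def)
  also have "\<dots> = (\<Sum>y\<in>nb m x. Pr m x y * W m n y (\<lambda>i. g (Suc i)))"
    by (simp add: W_def sum_distrib_left)
  finally show ?thesis using True by simp
qed (simp add: W_def WS_Suc)

end

fun zz :: "(nat \<Rightarrow> nat \<Rightarrow> nat) \<Rightarrow> nat \<Rightarrow> nat \<Rightarrow> nat \<Rightarrow> real" where
  "zz m v 0 x = (if x = v then 0 else 1)"
| "zz m v (Suc n) x = (if x = v then 0 else (\<Sum>y\<in>nb m x. Pr m x y * zz m v n y))"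

fun rr :: "(nat \<Rightarrow> nat \<Rightarrow> nat) \<Rightarrow> nat \<Rightarrow> nat \<Rightarrow> nat \<Rightarrow> real" where
  "rr m v 0 x = (if x = v then 1 else 0)"
| "rr m v (Suc n) x = (if x = v then 0 else (\<Sum>y\<in>nb m x. Pr m x y * rr m v n y))"

context G begin

lemma zz_W: "zz m v n x = W m n x (\<lambda>i u. u \<noteq> v)"
  by (induction n arbitrary: x) (simp_all add: W_0 W_Suc)

lemma rr_W: "rr m v n x = W m n x (\<lambda>i u. if i < n then u \<noteq> v else u = v)"
  by (induction n arbitrary: x) (simp_all add: W_0 W_Suc)

lemma ge_eq: "prob_ret_ge m v (Suc (Suc n)) = (\<Sum>y\<in>nb m v. Pr m v y * zz m v n y)"
proof -
  have "{xs. length xs = Suc (Suc n) \<and> xs!0 = v \<and> is_walk m xs \<and> (\<forall>i. 1 \<le> i \<and> i < Suc (Suc n) \<longrightarrow> xs!i \<noteq> v)}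
      = WS m (Suc n) v (\<lambda>i u. if i = 0 then u = v else u \<noteq> v)"
    unfolding WS_def
  proof (rule Collect_cong)
    fix xs :: "nat list"
    have "(\<forall>i. 1 \<le> i \<and> i < Suc (Suc n) \<longrightarrow> xs!i \<noteq> v) \<longleftrightarrow> (\<forall>i\<le>Suc n. i \<noteq> 0 \<longrightarrow> xs!i \<noteq> v)"
      by (rule L1)
    then show "(length xs = Suc (Suc n) \<and> xs!0 = v \<and> is_walk m xs \<and> (\<forall>i. 1 \<le> i \<and> i < Suc (Suc n) \<longrightarrow> xs!i \<noteq> v)) =
      (length xs = Suc (Suc n) \<and> xs!0 = v \<and> is_walk m xs \<and> (\<forall>i\<le>Suc n. if i = 0 then xs!i = v else xs!i \<noteq> v))"
      by auto
  qed
  then have "prob_ret_ge m v (Suc (Suc n)) = W m (Suc n) v (\<lambda>i u. if i = 0 then u = v else u \<noteq> v)"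
    unfolding prob_ret_ge_def W_def by simp
  then show ?thesis by (simp add: W_Suc zz_W)
qed

lemma eq_eq: "prob_ret_eq m v (Suc n) = (\<Sum>y\<in>nb m v. Pr m v y * rr m v n y)"
proof -
  have "{xs. length xs = Suc (Suc n) \<and> xs!0 = v \<and> is_walk m xs \<and> (\<forall>i. 1 \<le> i \<and> i < Suc n \<longrightarrow> xs!i \<noteq> v) \<and> xs ! Suc n = v}
      = WS m (Suc n) v (\<lambda>i u. if i = 0 then u = v else if i < Suc n then u \<noteq> v else u = v)"
    unfolding WS_def
  proof (rule Collect_cong)
    fix xs :: "nat list"
    have "((\<forall>i. 1 \<le> i \<and> i < Suc n \<longrightarrow> xs!i \<noteq> v) \<and> xs ! Suc n = v) \<longleftrightarrow> (\<forall>i\<le>Suc n. i \<noteq> 0 \<longrightarrow> (if i < Suc n then xs!i \<noteq> v else xs!i = v))"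
      by (rule L2)
    then show "(length xs = Suc (Suc n) \<and> xs!0 = v \<and> is_walk m xs \<and> (\<forall>i. 1 \<le> i \<and> i < Suc n \<longrightarrow> xs!i \<noteq> v) \<and> xs ! Suc n = v) =
      (length xs = Suc (Suc n) \<and> xs!0 = v \<and> is_walk m xs \<and> (\<forall>i\<le>Suc n. if i = 0 then xs!i = v else if i < Suc n then xs!i \<noteq> v else xs!i = v))"
      by auto
  qed
  then have "prob_ret_eq m v (Suc n) = W m (Suc n) v (\<lambda>i u. if i = 0 then u = v else if i < Suc n then u \<noteq> v else u = v)"
    unfolding prob_ret_eq_def W_def by simp
  then show ?thesis by (simp add: W_Suc rr_W)
qed

end



context G begin

lemma rr_nonneg: "0 \<le> rr m v n x"
  by (induction n arbitrary: x) (auto intro!: sum_nonneg mult_nonneg_nonneg Pr_nonneg)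

lemma zz_nonneg: "0 \<le> zz m v n x"
  by (induction n arbitrary: x) (auto intro!: sum_nonneg mult_nonneg_nonneg Pr_nonneg)

lemma zz_split: "zz m v n x = zz m v (Suc n) x + rr m v (Suc n) x"
proof (induction n arbitrary: x)
  case 0
  show ?case
  proof (cases "x = v")
    case False
    have "(\<Sum>y\<in>nb m x. Pr m x y * zz m v 0 y) + (\<Sum>y\<in>nb m x. Pr m x y * rr m v 0 y)
        = (\<Sum>y\<in>nb m x. Pr m x y)"
      by (simp add: sum.distrib[symmetric] algebra_simps) (rule sum.cong, auto simp: distrib_left[symmetric])
    then show ?thesis using False sum_Pr by simp
  qed simp
next
  case (Suc n)
  show ?case
  proof (cases "x = v")
    case False
    have "(\<Sum>y\<in>nb m x. Pr m x y * zz m v n y) = (\<Sum>y\<in>nb m x. Pr m x y * zz m v (Suc n) y) + (\<Sum>y\<in>nb m x. Pr m x y * rr m v (Suc n) y)"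
      by (subst Suc.IH) (simp add: sum.distrib[symmetric] distrib_left)
    moreover have "zz m v (Suc n) x = (\<Sum>y\<in>nb m x. Pr m x y * zz m v n y)"
      using False by (simp only: zz.simps(2)[of m v n x] if_False)
    moreover have "zz m v (Suc (Suc n)) x = (\<Sum>y\<in>nb m x. Pr m x y * zz m v (Suc n) y)"
      using False by (simp only: zz.simps(2)[of m v "Suc n" x] if_False)
    moreover have "rr m v (Suc (Suc n)) x = (\<Sum>y\<in>nb m x. Pr m x y * rr m v (Suc n) y)"
      using False by (simp only: rr.simps(2)[of m v "Suc n" x] if_False)
    ultimately show ?thesis by simp
  qed simp
qed

lemma zz_le1: "zz m v n x \<le> 1"
proof (induction n arbitrary: x)
  case (Suc n)
  have "(\<Sum>y\<in>nb m x. Pr m x y * zz m v n y) \<le> (\<Sum>y\<in>nb m x. Pr m x y)"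
    by (rule sum_mono) (use Suc.IH Pr_nonneg in \<open>simp add: mult_left_le\<close>)
  then show ?case using sum_Pr by simp
qed simp

lemma rr_supp: "rr m v n x \<noteq> 0 \<Longrightarrow> x \<in> ball m v n"
proof (induction n arbitrary: x)
  case 0 then show ?case by (simp split: if_splits)
next
  case (Suc n)
  then have "x \<noteq> v" "(\<Sum>y\<in>nb m x. Pr m x y * rr m v n y) \<noteq> 0" by (auto split: if_splits)
  then obtain y where y: "y \<in> nb m x" "rr m v n y \<noteq> 0" by (metis (no_types, lifting) mult_zero_right sum.neutral)
  have "y \<in> ball m v n" using Suc.IH y(2) by blast
  then show ?case using y(1) sym by (auto simp: nb_def)
qed

lemma zz_supp: "zz m v n x \<noteq> 1 \<Longrightarrow> x \<in> ball m v n"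
proof (induction n arbitrary: x)
  case 0 then show ?case by (simp split: if_splits)
next
  case (Suc n)
  show ?case
  proof (cases "x = v")
    case True then show ?thesis using v_ball by simp
  next
    case False
    then have "(\<Sum>y\<in>nb m x. Pr m x y * zz m v n y) \<noteq> (\<Sum>y\<in>nb m x. Pr m x y * 1)"
      using Suc.prems sum_Pr by simp
    then obtain y where y: "y \<in> nb m x" "zz m v n y \<noteq> 1" by (metis (no_types, lifting) sum.cong)
    have "y \<in> ball m v n" using Suc.IH y(2) by blast
    then show ?thesis using y(1) sym by (auto simp: nb_def)
  qed
qed

definition cc :: "nat \<Rightarrow> real" where
  "cc n = (\<Sum>y\<in>nb m v. real (m v y) * rr m v (Suc n) y)"

definition ZZ :: "nat \<Rightarrow> real" where
  "ZZ n = (\<Sum>y\<in>nb m v. real (m v y) * zz m v n y)"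

lemma cc_nonneg: "0 \<le> cc n"
  unfolding cc_def by (rule sum_nonneg, rule mult_nonneg_nonneg, simp, rule rr_nonneg)

lemma ZZ_nonneg: "0 \<le> ZZ n"
  unfolding ZZ_def by (rule sum_nonneg, rule mult_nonneg_nonneg, simp, rule zz_nonneg)

lemma ZZ_split: "ZZ n = ZZ (Suc n) + cc n"
  unfolding ZZ_def cc_def
  by (subst zz_split) (simp add: sum.distrib[symmetric] distrib_left)

lemma ratio_eq: "prob_ret_eq m v (Suc (Suc n)) / prob_ret_ge m v (Suc (Suc n)) = cc n / ZZ n"
proof -
  have d: "real (deg m v) > 0" using deg_pos by simp
  have "prob_ret_eq m v (Suc (Suc n)) = cc n / real (deg m v)"
    unfolding eq_eq cc_def Pr_def by (simp add: sum_divide_distrib)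
  moreover have "prob_ret_ge m v (Suc (Suc n)) = ZZ n / real (deg m v)"
    unfolding ge_eq ZZ_def Pr_def by (simp add: sum_divide_distrib)
  ultimately show ?thesis using d by simp
qed

lemma eq_one: "prob_ret_eq m v 1 = 0"
  using eq_eq[of 0] noloop[of v] by (auto simp: nb_def intro!: sum.neutral)

end



lemma CS_sum:
  fixes a :: "'a \<Rightarrow> real"
  shows "(\<Sum>i\<in>I. a i * b i)\<^sup>2 \<le> (\<Sum>i\<in>I. (a i)\<^sup>2) * (\<Sum>i\<in>I. (b i)\<^sup>2)"
proof (cases "(\<Sum>i\<in>I. (b i)\<^sup>2) > 0")
  case False
  then consider "\<And>i. i\<in>I \<Longrightarrow> b i = 0" | "infinite I"
    by (metis (mono_tags, lifting) sum_pos2 zero_le_power2 zero_less_power2)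
  thus ?thesis
    by fastforce
next
  case True
  define r where "r \<equiv> (\<Sum>i\<in>I. a i * b i) / (\<Sum>i\<in>I. (b i)\<^sup>2)"
  have "0 \<le> (\<Sum>i\<in>I. (a i - r * b i)\<^sup>2)"
    by (simp add: sum_nonneg)
  also have "... = (\<Sum>i\<in>I. (a i)\<^sup>2) - 2 * r * (\<Sum>i\<in>I. a i * b i) + r\<^sup>2 * (\<Sum>i\<in>I. (b i)\<^sup>2)"
    by (simp add: algebra_simps power2_eq_square sum_distrib_left flip: sum.distrib)
  also have "\<dots> = (\<Sum>i\<in>I. (a i)\<^sup>2) - ((\<Sum>i\<in>I. a i * b i))\<^sup>2 / (\<Sum>i\<in>I. (b i)\<^sup>2)"
    by (simp add: r_def power2_eq_square)
  finally have "0 \<le> (\<Sum>i\<in>I. (a i)\<^sup>2) - ((\<Sum>i\<in>I. a i * b i))\<^sup>2 / (\<Sum>i\<in>I. (b i)\<^sup>2)" .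
  hence "((\<Sum>i\<in>I. a i * b i))\<^sup>2 / (\<Sum>i\<in>I. (b i)\<^sup>2) \<le> (\<Sum>i\<in>I. (a i)\<^sup>2)"
    by (simp add: le_diff_eq)
  thus "((\<Sum>i\<in>I. a i * b i))\<^sup>2 \<le> (\<Sum>i\<in>I. (a i)\<^sup>2) * (\<Sum>i\<in>I. (b i)\<^sup>2)"
    by (simp add: pos_divide_le_eq True)
qed

lemma CS_weighted:
  fixes w f g :: "'a \<Rightarrow> real"
  assumes "\<And>x. x \<in> I \<Longrightarrow> 0 \<le> w x"
  shows "(\<Sum>x\<in>I. w x * f x * g x)\<^sup>2 \<le> (\<Sum>x\<in>I. w x * f x * f x) * (\<Sum>x\<in>I. w x * g x * g x)"
proof -
  have "(\<Sum>x\<in>I. (sqrt (w x) * f x) * (sqrt (w x) * g x))\<^sup>2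
      \<le> (\<Sum>x\<in>I. (sqrt (w x) * f x)\<^sup>2) * (\<Sum>x\<in>I. (sqrt (w x) * g x)\<^sup>2)"
    by (rule CS_sum)
  moreover have "(\<Sum>x\<in>I. (sqrt (w x) * f x) * (sqrt (w x) * g x)) = (\<Sum>x\<in>I. w x * f x * g x)"
    by (rule sum.cong) (use assms in \<open>auto simp: algebra_simps\<close>)
  moreover have "(\<Sum>x\<in>I. (sqrt (w x) * f x)\<^sup>2) = (\<Sum>x\<in>I. w x * f x * f x)"
    by (rule sum.cong) (use assms in \<open>auto simp: algebra_simps power2_eq_square\<close>)
  moreover have "(\<Sum>x\<in>I. (sqrt (w x) * g x)\<^sup>2) = (\<Sum>x\<in>I. w x * g x * g x)"
    by (rule sum.cong) (use assms in \<open>auto simp: algebra_simps power2_eq_square\<close>)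
  ultimately show ?thesis by simp
qed

lemma sum_supp:
  assumes "finite A" "finite B" "\<And>x. x \<in> A \<Longrightarrow> x \<notin> B \<Longrightarrow> F x = 0" "\<And>x. x \<in> B \<Longrightarrow> x \<notin> A \<Longrightarrow> F x = 0"
  shows "sum F A = sum F B"
proof -
  have "sum F A = sum F (A \<union> B)" by (rule sum.mono_neutral_left) (use assms in auto)
  also have "\<dots> = sum F B" by (rule sum.mono_neutral_right) (use assms in auto)
  finally show ?thesis .
qed

definition ip :: "(nat \<Rightarrow> nat \<Rightarrow> nat) \<Rightarrow> nat set \<Rightarrow> (nat \<Rightarrow> real) \<Rightarrow> (nat \<Rightarrow> real) \<Rightarrow> real" where
  "ip m B f g = (\<Sum>x\<in>B. real (deg m x) * f x * g x)"

definition Qop :: "(nat \<Rightarrow> nat \<Rightarrow> nat) \<Rightarrow> nat \<Rightarrow> (nat \<Rightarrow> real) \<Rightarrow> nat \<Rightarrow> real" where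
  "Qop m v f x = (if x = v then 0 else (\<Sum>y\<in>nb m x. Pr m x y * f y))"

context G begin

lemma degQ: "real (deg m x) * Qop m v f x = (if x = v then 0 else (\<Sum>y\<in>nb m x. real (m x y) * f y))"
  using deg_pos[of x] by (simp add: Qop_def Pr_def sum_distrib_left)

lemma sum_nb_B:
  assumes "finite B" "\<And>y. f y \<noteq> 0 \<Longrightarrow> y \<in> B"
  shows "(\<Sum>y\<in>nb m x. real (m x y) * f y) = (\<Sum>y\<in>B. real (m x y) * f y)"
  by (rule sum_supp) (use assms fin_nb in \<open>auto simp: nb_def\<close>)

lemma ipQ:
  assumes "finite B" "\<And>y. f y \<noteq> 0 \<Longrightarrow> y \<in> B" "g v = 0"
  shows "ip m B g (Qop m v f) = (\<Sum>x\<in>B. \<Sum>y\<in>B. g x * real (m x y) * f y)"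
  unfolding ip_def
proof (rule sum.cong)
  fix x assume "x \<in> B"
  have "real (deg m x) * g x * Qop m v f x = g x * (real (deg m x) * Qop m v f x)" by simp
  also have "\<dots> = g x * (\<Sum>y\<in>nb m x. real (m x y) * f y)"
    using assms(3) by (simp add: degQ)
  also have "\<dots> = g x * (\<Sum>y\<in>B. real (m x y) * f y)"
    by (simp add: sum_nb_B[OF assms(1,2)])
  finally show "real (deg m x) * g x * Qop m v f x = (\<Sum>y\<in>B. g x * real (m x y) * f y)"
    by (simp add: sum_distrib_left mult.assoc)
qed simp

lemma ip_sym: "ip m B f g = ip m B g f"
  unfolding ip_def by (simp add: mult_ac)

lemma selfadj:
  assumes "finite B" "\<And>y. f y \<noteq> 0 \<Longrightarrow> y \<in> B" "\<And>y. g y \<noteq> 0 \<Longrightarrow> y \<in> B" "f v = 0" "g v = 0"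
  shows "ip m B g (Qop m v f) = ip m B (Qop m v g) f"
proof -
  have "ip m B (Qop m v g) f = ip m B f (Qop m v g)" by (rule ip_sym)
  also have "\<dots> = (\<Sum>x\<in>B. \<Sum>y\<in>B. f x * real (m x y) * g y)" by (rule ipQ) (use assms in auto)
  also have "\<dots> = (\<Sum>y\<in>B. \<Sum>x\<in>B. f x * real (m x y) * g y)" by (rule sum.swap)
  also have "\<dots> = (\<Sum>y\<in>B. \<Sum>x\<in>B. g y * real (m y x) * f x)" by (simp add: sym mult_ac)
  also have "\<dots> = ip m B g (Qop m v f)" by (rule ipQ[symmetric]) (use assms in auto)
  finally show ?thesis ..
qed

lemma Q_contract:
  assumes "finite B" "\<And>y. f y \<noteq> 0 \<Longrightarrow> y \<in> B"
  shows "ip m B (Qop m v f) (Qop m v f) \<le> ip m B f f"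
proof -
  have step: "real (deg m x) * Qop m v f x * Qop m v f x \<le> (\<Sum>y\<in>B. real (m x y) * (f y * f y))" for x
  proof (cases "x = v")
    case False
    have "(\<Sum>y\<in>nb m x. Pr m x y * f y)\<^sup>2 \<le> (\<Sum>y\<in>nb m x. Pr m x y * 1 * 1) * (\<Sum>y\<in>nb m x. Pr m x y * f y * f y)"
      using CS_weighted[of "nb m x" "Pr m x" "\<lambda>_. 1" f] Pr_nonneg by simp
    then have "(\<Sum>y\<in>nb m x. Pr m x y * f y)\<^sup>2 \<le> (\<Sum>y\<in>nb m x. Pr m x y * f y * f y)"
      using sum_Pr by simp
    then have "real (deg m x) * (\<Sum>y\<in>nb m x. Pr m x y * f y)\<^sup>2 \<le> real (deg m x) * (\<Sum>y\<in>nb m x. Pr m x y * f y * f y)"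
      by (rule mult_left_mono) simp
    also have "\<dots> = (\<Sum>y\<in>nb m x. real (m x y) * (f y * f y))"
      using deg_pos[of x] by (simp add: sum_distrib_left Pr_def mult.assoc)
    also have "\<dots> = (\<Sum>y\<in>B. real (m x y) * (f y * f y))"
      by (rule sum_nb_B) (use assms in auto)
    finally show ?thesis using False by (simp add: Qop_def power2_eq_square mult.assoc)
  next
    case True
    then show ?thesis by (simp add: Qop_def sum_nonneg)
  qed
  have "ip m B (Qop m v f) (Qop m v f) \<le> (\<Sum>x\<in>B. \<Sum>y\<in>B. real (m x y) * (f y * f y))"
    unfolding ip_def by (rule sum_mono) (rule step)
  also have "\<dots> = (\<Sum>y\<in>B. (f y * f y) * (\<Sum>x\<in>B. real (m y x)))"
    by (subst sum.swap) (simp add: sum_distrib_left sym mult_ac)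
  also have "\<dots> \<le> (\<Sum>y\<in>B. (f y * f y) * real (deg m y))"
  proof (rule sum_mono)
    fix y
    have "(\<Sum>x\<in>B. real (m y x)) = (\<Sum>x\<in>B \<inter> nb m y. real (m y x))"
      by (rule sum.mono_neutral_right) (use assms in \<open>auto simp: nb_def\<close>)
    also have "\<dots> \<le> (\<Sum>x\<in>nb m y. real (m y x))"
      by (rule sum_mono2) (use fin_nb in auto)
    also have "\<dots> = real (deg m y)" by (simp add: deg_nb)
    finally show "(f y * f y) * (\<Sum>x\<in>B. real (m y x)) \<le> (f y * f y) * real (deg m y)"
      by (rule mult_left_mono) simp
  qed
  also have "\<dots> = ip m B f f" unfolding ip_def by (simp add: mult_ac)
  finally show ?thesis .
qed

end



declare ball.simps[simp del]
context G begin

lemma rr_Q: "rr m v (Suc (Suc n)) = Qop m v (rr m v (Suc n))"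
  by (rule ext) (simp add: Qop_def)

lemma rr_v: "rr m v (Suc n) v = 0" by simp

lemma rr_supp_R: "Suc a \<le> R \<Longrightarrow> rr m v (Suc a) x \<noteq> 0 \<Longrightarrow> x \<in> ball m v R"
  using rr_supp ball_mono by blast

lemma deg_rr1: "real (deg m x) * rr m v 1 x = real (m v x)"
proof (cases "x = v")
  case True then show ?thesis by (simp add: noloop)
next
  case False
  have "(\<Sum>y\<in>nb m x. Pr m x y * (if y = v then 1 else 0)) = (\<Sum>y\<in>nb m x. if y = v then Pr m x y else 0)"
    by (rule sum.cong) auto
  also have "\<dots> = (if v \<in> nb m x then Pr m x v else 0)"
    using fin_nb by (simp add: sum.delta')
  finally have e: "rr m v 1 x = (if v \<in> nb m x then Pr m x v else 0)" using False by simp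
  show ?thesis unfolding e
    using deg_pos[of x] by (simp add: Pr_def nb_def sym[of x v])
qed

lemma ip_rr:
  assumes "a + b + 2 \<le> R"
  shows "ip m (ball m v R) (rr m v (Suc a)) (rr m v (Suc b)) = cc (a + b)"
  using assms
proof (induction a arbitrary: b)
  case 0
  have "ip m (ball m v R) (rr m v 1) (rr m v (Suc b)) = (\<Sum>x\<in>ball m v R. real (m v x) * rr m v (Suc b) x)"
    unfolding ip_def by (rule sum.cong) (simp_all add: deg_rr1[symmetric])
  also have "\<dots> = cc b"
    unfolding cc_def
    by (rule sum_supp[OF fin_ball fin_nb]) (use rr_supp_R[of b R] 0 in \<open>auto simp del: rr.simps simp: nb_def\<close>)
  finally show ?case by (simp del: rr.simps ball.simps)
next
  case (Suc a)
  let ?B = "ball m v R"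
  have "ip m ?B (rr m v (Suc (Suc a))) (rr m v (Suc b)) = ip m ?B (Qop m v (rr m v (Suc a))) (rr m v (Suc b))"
    by (simp only: rr_Q)
  also have "\<dots> = ip m ?B (rr m v (Suc a)) (Qop m v (rr m v (Suc b)))"
    by (rule selfadj[symmetric]) (use fin_ball rr_supp_R[of b R] rr_supp_R[of a R] Suc.prems in \<open>auto simp del: rr.simps simp: rr_v\<close>)
  also have "\<dots> = ip m ?B (rr m v (Suc a)) (rr m v (Suc (Suc b)))"
    by (simp only: rr_Q)
  also have "\<dots> = cc (a + Suc b)" by (rule Suc.IH) (use Suc.prems in simp)
  finally show ?case by (simp del: rr.simps ball.simps)
qed

lemma ip_rr':
  "a + b + 2 \<le> R \<Longrightarrow> n = a + b \<Longrightarrow> ip m (ball m v R) (rr m v (Suc a)) (rr m v (Suc b)) = cc n"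
  using ip_rr by blast

lemma ee_nonneg: "0 \<le> ip m B f f"
  unfolding ip_def by (rule sum_nonneg) (simp add: mult.assoc)

lemma cc_even: "cc (2*j) = ip m (ball m v (2*j+2)) (rr m v (Suc j)) (rr m v (Suc j))"
  by (rule ip_rr'[symmetric]) simp_all

lemma E1: "cc (2*j+2) \<le> cc (2*j)"
proof -
  let ?B = "ball m v (2*j+4)"
  have "cc (2*j+2) = ip m ?B (rr m v (Suc (Suc j))) (rr m v (Suc (Suc j)))"
    by (rule ip_rr'[symmetric]) simp_all
  also have "\<dots> = ip m ?B (Qop m v (rr m v (Suc j))) (Qop m v (rr m v (Suc j)))" by (simp only: rr_Q)
  also have "\<dots> \<le> ip m ?B (rr m v (Suc j)) (rr m v (Suc j))"
  proof (rule Q_contract[OF fin_ball])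
    fix y assume "rr m v (Suc j) y \<noteq> 0"
    then show "y \<in> ?B" by (rule rr_supp_R[rotated]) simp
  qed
  also have "\<dots> = cc (2*j)" by (rule ip_rr') simp_all
  finally show ?thesis .
qed

lemma ip_CS: "(ip m B f g)\<^sup>2 \<le> ip m B f f * ip m B g g"
  unfolding ip_def by (rule CS_weighted) simp

lemma E2: "(cc (2*j+2))\<^sup>2 \<le> cc (2*j) * cc (2*j+4)"
proof -
  let ?B = "ball m v (2*j+6)"
  have "cc (2*j+2) = ip m ?B (rr m v (Suc j)) (rr m v (Suc (Suc (Suc j))))"
    by (rule ip_rr'[symmetric]) simp_all
  moreover have "cc (2*j) = ip m ?B (rr m v (Suc j)) (rr m v (Suc j))"
    by (rule ip_rr'[symmetric]) simp_all
  moreover have "cc (2*j+4) = ip m ?B (rr m v (Suc (Suc (Suc j)))) (rr m v (Suc (Suc (Suc j))))"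
    by (rule ip_rr'[symmetric]) simp_all
  ultimately show ?thesis using ip_CS by simp
qed

lemma E3: "cc (2*j+1) \<le> cc (2*j)"
proof -
  let ?B = "ball m v (2*j+4)"
  have a: "cc (2*j+1) = ip m ?B (rr m v (Suc j)) (rr m v (Suc (Suc j)))"
    by (rule ip_rr'[symmetric]) simp_all
  have b: "cc (2*j) = ip m ?B (rr m v (Suc j)) (rr m v (Suc j))"
    by (rule ip_rr'[symmetric]) simp_all
  have c: "cc (2*j+2) = ip m ?B (rr m v (Suc (Suc j))) (rr m v (Suc (Suc j)))"
    by (rule ip_rr'[symmetric]) simp_all
  have "(cc (2*j+1))\<^sup>2 \<le> cc (2*j) * cc (2*j+2)" unfolding a b c by (rule ip_CS)
  also have "\<dots> \<le> cc (2*j) * cc (2*j)"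
    by (rule mult_left_mono[OF E1]) (rule cc_nonneg)
  finally have "(cc (2*j+1))\<^sup>2 \<le> (cc (2*j))\<^sup>2" by (simp add: power2_eq_square)
  then show ?thesis using cc_nonneg[of "2*j"] by (rule power2_le_imp_le)
qed

lemma rr_le1: "rr m v (Suc n) x \<le> 1"
  using zz_split[of n x] zz_le1[of n x] zz_nonneg[of "Suc n" x] by linarith

lemma E4: "cc n \<le> real (deg m v)"
proof -
  have "cc n \<le> (\<Sum>y\<in>nb m v. real (m v y) * 1)"
    unfolding cc_def by (rule sum_mono) (simp only: mult_1_right, rule mult_left_le[OF rr_le1], simp)
  then show ?thesis by (simp add: deg_nb)
qed

end





context G begin

lemma ball_Suc_nb: "x \<in> ball m v n \<Longrightarrow> 0 < m x y \<Longrightarrow> y \<in> ball m v (Suc n)"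
  using nb_ball[of x n] by (auto simp: nb_def)

lemma energy_bound: "1 / (2 * real (Suc n)) \<le> ZZ n"
proof -
  define w where "w x = 1 - zz m v n x" for x
  define B where "B = ball m v (Suc n)"
  have finB: "finite B" unfolding B_def by (rule fin_ball)
  have w_supp: "w x \<noteq> 0 \<Longrightarrow> x \<in> ball m v n" for x
    using zz_supp[of n x] unfolding w_def by auto
  have w_supp': "w x \<noteq> 0 \<Longrightarrow> x \<in> B" for x
    using w_supp[of x] ball_mono[of n "Suc n"] unfolding B_def by auto
  have w_nonneg: "0 \<le> w x" for x using zz_le1[of n x] unfolding w_def by simp
  have wv: "w v = 1" unfolding w_def by (cases n) simp_all
  have sumB: "(\<Sum>y\<in>B. real (m x y) * f y) = (\<Sum>y\<in>nb m x. real (m x y) * f y)"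
    if "x \<in> ball m v n" for x and f :: "nat \<Rightarrow> real"
    by (rule sum_supp[OF finB fin_nb]) (use that ball_Suc_nb in \<open>auto simp: B_def nb_def\<close>)
  define D where "D x = real (deg m x) * w x - (\<Sum>y\<in>B. real (m x y) * w y)" for x
  have Dx: "D x = - real (deg m x) * rr m v (Suc n) x" if "x \<in> ball m v n" "x \<noteq> v" for x
  proof -
    have "(\<Sum>y\<in>B. real (m x y) * w y) = (\<Sum>y\<in>nb m x. real (m x y) * w y)" by (rule sumB[OF that(1)])
    also have "\<dots> = (\<Sum>y\<in>nb m x. real (m x y)) - (\<Sum>y\<in>nb m x. real (m x y) * zz m v n y)"
      unfolding w_def by (simp add: algebra_simps sum_subtractf)
    also have "(\<Sum>y\<in>nb m x. real (m x y) * zz m v n y) = real (deg m x) * zz m v (Suc n) x"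
      using that(2) deg_pos[of x] by (simp add: Pr_def sum_distrib_left)
    finally have "(\<Sum>y\<in>B. real (m x y) * w y) = real (deg m x) - real (deg m x) * zz m v (Suc n) x"
      by (simp add: deg_nb)
    then show ?thesis unfolding D_def w_def using zz_split[of n x] by (simp add: algebra_simps)
  qed
  have Dv: "D v = ZZ n"
  proof -
    have "(\<Sum>y\<in>B. real (m v y) * w y) = (\<Sum>y\<in>nb m v. real (m v y) * w y)" by (rule sumB[OF v_ball])
    also have "\<dots> = (\<Sum>y\<in>nb m v. real (m v y)) - ZZ n"
      unfolding w_def ZZ_def by (simp add: algebra_simps sum_subtractf)
    finally show ?thesis unfolding D_def wv by (simp add: deg_nb)
  qed
  define En where "En = (\<Sum>x\<in>B. \<Sum>y\<in>B. real (m x y) * (w x - w y)\<^sup>2)"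
  have rowsum: "w x * w x * (\<Sum>y\<in>B. real (m x y)) = w x * w x * real (deg m x)" for x
  proof (cases "w x = 0")
    case False
    then have "x \<in> ball m v n" by (rule w_supp)
    then have "(\<Sum>y\<in>B. real (m x y) * 1) = (\<Sum>y\<in>nb m x. real (m x y) * 1)" by (rule sumB)
    then show ?thesis by (simp add: deg_nb)
  qed simp
  have En_eq: "En = 2 * (\<Sum>x\<in>B. w x * D x)"
  proof -
    have "En = (\<Sum>x\<in>B. \<Sum>y\<in>B. real (m x y) * (w x * w x)) + (\<Sum>x\<in>B. \<Sum>y\<in>B. real (m x y) * (w y * w y))
               - 2 * (\<Sum>x\<in>B. \<Sum>y\<in>B. real (m x y) * w x * w y)"
      unfolding En_def
      by (simp add: power2_eq_square algebra_simps sum.distrib sum_subtractf sum_distrib_left)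
    also have "(\<Sum>x\<in>B. \<Sum>y\<in>B. real (m x y) * (w y * w y)) = (\<Sum>x\<in>B. \<Sum>y\<in>B. real (m x y) * (w x * w x))"
      by (subst sum.swap) (simp add: sym)
    also have "(\<Sum>x\<in>B. \<Sum>y\<in>B. real (m x y) * (w x * w x)) = (\<Sum>x\<in>B. w x * w x * real (deg m x))"
      by (rule sum.cong[OF refl]) (subst rowsum[symmetric], simp add: sum_distrib_left mult_ac)
    finally show ?thesis unfolding D_def
      by (simp add: algebra_simps sum_subtractf sum_distrib_left sum.distrib)
  qed
  have "(\<Sum>x\<in>B. w x * D x) = w v * D v + (\<Sum>x\<in>B - {v}. w x * D x)"
    using finB v_ball[of "Suc n"] by (simp add: B_def sum.remove)
  also have "(\<Sum>x\<in>B - {v}. w x * D x) \<le> 0"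
  proof (rule sum_nonpos)
    fix x assume x: "x \<in> B - {v}"
    show "w x * D x \<le> 0"
    proof (cases "w x = 0")
      case False
      then have "x \<in> ball m v n" by (rule w_supp)
      then have "D x \<le> 0" using Dx x rr_nonneg[of "Suc n" x] by simp
      then show ?thesis using w_nonneg[of x] by (simp add: mult_nonneg_nonpos)
    qed simp
  qed
  finally have En_le: "En \<le> 2 * ZZ n" using En_eq wv Dv by simp
  obtain p where p: "p 0 = v" "\<forall>j<Suc n. 0 < m (p j) (p (Suc j))" "\<forall>j\<le>Suc n. p j \<in> ball m v j"
      "\<forall>j<Suc n. p (Suc j) \<notin> ball m v j"
    using path_exists[of n] by blast
  have pinj: "inj_on p {..Suc n}" by (rule path_inj) (use p in auto)
  have pB: "p j \<in> B" if "j \<le> Suc n" for j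
    using p(3) that ball_mono[of j "Suc n"] unfolding B_def by auto
  define d where "d j = w (p j) - w (p (Suc j))" for j
  have "(\<Sum>j<Suc n. d j) = w (p 0) - w (p (Suc n))"
    unfolding d_def by (rule sum_lessThan_telescope')
  also have "w (p (Suc n)) = 0"
  proof (rule ccontr)
    assume "w (p (Suc n)) \<noteq> 0"
    then have "p (Suc n) \<in> ball m v n" by (rule w_supp)
    with p(4) show False by auto
  qed
  finally have sum1: "(\<Sum>j<Suc n. d j) = 1" using p(1) wv by simp
  have "(\<Sum>j<Suc n. d j * 1)\<^sup>2 \<le> (\<Sum>j<Suc n. (d j)\<^sup>2) * (\<Sum>j<Suc n. 1\<^sup>2)"
    by (rule CS_sum)
  then have cs: "1 \<le> (\<Sum>j<Suc n. (d j)\<^sup>2) * real (Suc n)" using sum1 by simp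
  let ?S = "(\<lambda>j. (p j, p (Suc j))) ` {..<Suc n}"
  have injS: "inj_on (\<lambda>j. (p j, p (Suc j))) {..<Suc n}"
    using pinj by (auto simp: inj_on_def)
  have "(\<Sum>j<Suc n. (d j)\<^sup>2) = (\<Sum>(x,y)\<in>?S. (w x - w y)\<^sup>2)"
    by (subst sum.reindex[OF injS]) (simp add: d_def)
  also have "\<dots> \<le> (\<Sum>(x,y)\<in>?S. real (m x y) * (w x - w y)\<^sup>2)"
  proof (rule sum_mono)
    fix xy assume "xy \<in> ?S"
    then obtain j where j: "j < Suc n" "xy = (p j, p (Suc j))" by auto
    then have "0 < m (p j) (p (Suc j))" using p(2) by blast
    then have "1 \<le> real (m (p j) (p (Suc j)))" by simp
    then show "(case xy of (x, y) \<Rightarrow> (w x - w y)\<^sup>2) \<le> (case xy of (x, y) \<Rightarrow> real (m x y) * (w x - w y)\<^sup>2)"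
      using j(2) by (simp add: mult_le_cancel_right1)
  qed
  also have "\<dots> \<le> (\<Sum>(x,y)\<in>B \<times> B. real (m x y) * (w x - w y)\<^sup>2)"
    by (rule sum_mono2) (use finB pB in auto)
  also have "\<dots> = En" unfolding En_def by (simp add: sum.cartesian_product)
  finally have "(\<Sum>j<Suc n. (d j)\<^sup>2) \<le> En" .
  then have "1 \<le> En * real (Suc n)" using cs
    by (meson mult_right_mono of_nat_0_le_iff order_trans)
  then have "1 \<le> 2 * ZZ n * real (Suc n)" using En_le
    by (meson mult_right_mono of_nat_0_le_iff order_trans)
  then show ?thesis by (simp add: field_simps)
qed

end

theorem theorem1p2:
  shows "\<exists>C::real. \<forall>(m :: nat \<Rightarrow> nat \<Rightarrow> nat) (v::nat) (t::nat).
           multigraph_ok m \<and> 1 \<le> t \<longrightarrow>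
           prob_ret_eq m v t / prob_ret_ge m v t \<le> C * ln (real (deg m v) * real t) / real t"
proof (intro exI[of _ 100] allI impI, elim conjE)
  fix m :: "nat \<Rightarrow> nat \<Rightarrow> nat" and v t :: nat
  assume ok: "multigraph_ok m" and t1: "1 \<le> t"
  interpret G m v by (rule G.intro[OF ok])
  have "0 < deg m v" by (rule deg_pos)
  then have d1: "1 \<le> real (deg m v)" by simp
  show "prob_ret_eq m v t / prob_ret_ge m v t \<le> 100 * ln (real (deg m v) * real t) / real t"
  proof (cases "t = 1")
    case True
    then show ?thesis using eq_one d1 by simp
  next
    case False
    then obtain n where n: "t = Suc (Suc n)" using t1
      by (cases t; cases "t - 1") auto
    have "cc n / ZZ n \<le> 100 * ln (real (deg m v) * real (n+2)) / real (n+2)"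
      by (rule abstract[of cc "real (deg m v)" ZZ n, OF cc_nonneg E1 E2 E3 E4 d1 ZZ_split ZZ_nonneg energy_bound])
    then show ?thesis using ratio_eq[of n] n by simp
  qed
qed

end
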